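(* Let $n\ge2$, $p\in S_k$, and $\pi:\{1,\dots,k\}\to\{1,\dots,n\}$. Suppose there exist $i<j$ with $p_i>p_j$ and $\pi(i)\le\pi(j)$. Then no $w\in\widetilde{S}_n$ contains an instance of $p$ with strand assignment $\pi$.
   Context: An affine permutation of size $n$ is a bijection $w:\mathbb{Z}\to\mathbb{Z}$ with $w(i+n)=w(i)+n$ for all $i$ and $w(1)+\cdots+w(n)=\binom{n+1}{2}$; $\widetilde{S}_n$ is the group of these. For $p\in S_k$, an instance of $p$ in $w$ is a sequence of integers $i_1<\cdots<i_k$ such that $w(i_1),\dots,w(i_k)$ are in the same relative order as $p_1,\dots,p_k$; $w$ contains $p$ if such an instance exists. The strand assignment of an instance is the function $\pi:\{1,\dots,k\}\to\{1,\dots,n\}$ with $\pi(m)=j$ iff $i_m\equiv q\pmod n$, where $q\in\{1,\dots,n\}$ is the position such that $w(q)$ is the $j$-th smallest of $w(1),\dots,w(n)$. *)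

theory Defs
  imports "HOL-Combinatorics.Permutations"
begin

definition affine_perm :: "nat \<Rightarrow> (int \<Rightarrow> int) \<Rightarrow> bool" where
  "affine_perm n w \<longleftrightarrow> bij w \<and> (\<forall>i. w (i + int n) = w i + int n)
     \<and> (\<Sum>i\<in>{1..int n}. w i) = int ((n + 1) choose 2)"

definition is_instance :: "(int \<Rightarrow> int) \<Rightarrow> nat \<Rightarrow> (nat \<Rightarrow> nat) \<Rightarrow> (nat \<Rightarrow> int) \<Rightarrow> bool" where
  "is_instance w k p idx \<longleftrightarrow>
     (\<forall>a\<in>{1..k}. \<forall>b\<in>{1..k}. a < b \<longrightarrow> idx a < idx b) \<and>
     (\<forall>a\<in>{1..k}. \<forall>b\<in>{1..k}. w (idx a) < w (idx b) \<longleftrightarrow> p a < p b)"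

definition residue_rep :: "nat \<Rightarrow> int \<Rightarrow> int" where
  "residue_rep n i = ((i - 1) mod int n) + 1"

definition strand_rank :: "nat \<Rightarrow> (int \<Rightarrow> int) \<Rightarrow> int \<Rightarrow> nat" where
  "strand_rank n w q = card {r\<in>{1..int n}. w r \<le> w q}"

definition has_strand_assignment ::
  "nat \<Rightarrow> (int \<Rightarrow> int) \<Rightarrow> nat \<Rightarrow> (nat \<Rightarrow> int) \<Rightarrow> (nat \<Rightarrow> nat) \<Rightarrow> bool" where
  "has_strand_assignment n w k idx \<pi> \<longleftrightarrow>
     (\<forall>m\<in>{1..k}. \<pi> m = strand_rank n w (residue_rep n (idx m)))"

end

theory Submission
  imports Defs
begin

lemma per_nat: assumes "\<forall>i. w (i + int n) = w i + int n"
  shows "w (i + int m * int n) = w i + int m * int n"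
proof (induction m)
  case 0 then show ?case by simp
next
  case (Suc m)
  have "w (i + int (Suc m) * int n) = w ((i + int m * int n) + int n)"
    by (simp add: algebra_simps)
  also have "\<dots> = w (i + int m * int n) + int n" using assms by blast
  finally show ?case using Suc by (simp add: algebra_simps)
qed

lemma per_int: assumes "\<forall>i. w (i + int n) = w i + int n"
  shows "w (i + a * int n) = w i + a * int n"
proof (cases "a \<ge> 0")
  case True
  then obtain m where "a = int m" using nonneg_int_cases by blast
  then show ?thesis using per_nat[OF assms] by simp
next
  case False
  then obtain m where m: "a = - int m" using nonneg_int_cases[of "- a"] by (metis minus_minus neg_0_le_iff_le le_cases)
  have "w ((i + a * int n) + int m * int n) = w (i + a * int n) + int m * int n"
    using per_nat[OF assms] by blast
  then show ?thesis using m by (simp add: algebra_simps)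
qed

lemma rank_mono:
  assumes "strand_rank n w q1 \<le> strand_rank n w q2" "q1 \<in> {1..int n}"
  shows "w q1 \<le> w q2"
proof (rule ccontr)
  assume "\<not> w q1 \<le> w q2"
  hence "{r\<in>{1..int n}. w r \<le> w q2} \<subset> {r\<in>{1..int n}. w r \<le> w q1}"
    using assms(2) by auto
  hence "card {r\<in>{1..int n}. w r \<le> w q2} < card {r\<in>{1..int n}. w r \<le> w q1}"
    by (intro psubset_card_mono) (auto intro: finite_subset[of _ "{1..int n}"])
  thus False using assms(1) unfolding strand_rank_def by simp
qed

theorem mainTheorem5:
  fixes n k :: nat and p \<pi> :: "nat \<Rightarrow> nat"
  assumes "n \<ge> 2"
    and "p permutes {1..k}"
    and "\<pi> ` {1..k} \<subseteq> {1..n}"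
    and "\<exists>i\<in>{1..k}. \<exists>j\<in>{1..k}. i < j \<and> p i > p j \<and> \<pi> i \<le> \<pi> j"
  shows "\<not> (\<exists>w idx. affine_perm n w \<and> is_instance w k p idx
              \<and> has_strand_assignment n w k idx \<pi>)"
proof
  assume "\<exists>w idx. affine_perm n w \<and> is_instance w k p idx
              \<and> has_strand_assignment n w k idx \<pi>"
  then obtain w idx where A: "affine_perm n w" and I: "is_instance w k p idx"
    and H: "has_strand_assignment n w k idx \<pi>" by blast
  obtain i j where ij: "i\<in>{1..k}" "j\<in>{1..k}" "i < j" "p i > p j" "\<pi> i \<le> \<pi> j"
    using assms(4) by blast
  have per: "\<forall>i. w (i + int n) = w i + int n" using A unfolding affine_perm_def by blast
  define x where "x = idx i"
  define y where "y = idx j"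
  have xy: "x < y" using I ij unfolding is_instance_def x_def y_def by blast
  have wxy: "w y < w x" using I ij unfolding is_instance_def x_def y_def by blast
  define q1 where "q1 = residue_rep n x"
  define q2 where "q2 = residue_rep n y"
  define a where "a = (x - 1) div int n"
  define b where "b = (y - 1) div int n"
  have np: "int n > 0" using assms(1) by simp
  have q1r: "q1 \<in> {1..int n}" unfolding q1_def residue_rep_def using np
    by (simp add: pos_mod_bound pos_mod_sign add1_zle_eq)
  have q2r: "q2 \<in> {1..int n}" unfolding q2_def residue_rep_def using np
    by (simp add: pos_mod_bound pos_mod_sign add1_zle_eq)
  have xe: "x = q1 + a * int n" unfolding q1_def a_def residue_rep_def
    using div_mult_mod_eq[of "_ - 1" "int n"] by (simp add: algebra_simps)
  have ye: "y = q2 + b * int n" unfolding q2_def b_def residue_rep_def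
    using div_mult_mod_eq[of "_ - 1" "int n"] by (simp add: algebra_simps)
  have ab: "a \<le> b"
  proof (rule ccontr)
    assume "\<not> a \<le> b"
    hence "b + 1 \<le> a" by simp
    hence "(b + 1) * int n \<le> a * int n" using np by (simp add: mult_right_mono)
    thus False using xy xe ye q1r q2r by (simp add: algebra_simps)
  qed
  have "\<pi> i = strand_rank n w q1" "\<pi> j = strand_rank n w q2"
    using H ij unfolding has_strand_assignment_def q1_def q2_def x_def y_def by auto
  hence "w q1 \<le> w q2" using rank_mono[OF _ q1r] ij(5) by simp
  moreover have "a * int n \<le> b * int n" using ab np by (simp add: mult_right_mono)
  moreover have "w x = w q1 + a * int n" "w y = w q2 + b * int n"
    using xe ye per_int[OF per] by auto
  ultimately show False using wxy by simp
qed

end
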